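(* Let $(E,\mathcal E)$, $X$, i.i.d. copies $X_1,X_2,\ldots$, $\phi$, $\Phi(\theta)=\mathbb E[\phi(X,\theta)]$, $g$ and $G(\theta)=\mathbb E[g(X,\theta)]$ be as follows: $\phi:E\times\mathbb R^d\to\mathbb R$ is measurable in its first argument, convex in its second, $\phi(X,\theta)$ integrable for all $\theta$; $g:E\times\mathbb R^d\to\mathbb R^d$ is measurable in its first argument and almost surely $g(X,\theta)$ is a subgradient of $\phi(X,\cdot)$ at $\theta$ for all $\theta$. Assume $\Phi$ has a unique minimizer $\theta^*$, is $\mathcal C^2$ near $\theta^*$ with positive definite Hessian $\nabla^2\Phi(\theta^* )$ (smallest eigenvalue $\lambda_1$); there is $L>0$ with $\|G(\theta)\|\le L\|\theta-\theta^*\|$ for all $\theta$; there is $\eta>0$ with $\mathbb E[\sup_{\theta\in B(\theta^*,\eta)}\|g(X_1,\theta)-G(\theta)\|^2]<\infty$; and $\Gamma=\mathbb E[g(X_1,\theta^* )g(X_1,\theta^* )^\top]$ is finite. Fix $\delta>1/\lambda_1$, deterministic $\theta_0$, and $\theta_k=\theta_{k-1}-\frac{\delta}{k}g(X_k,\theta_{k-1})$. For $n\ge1$ let $\tilde Y^n_k=\frac{k}{\sqrt n}(\theta_k-\theta^* )$, a Markov chain with transition kernels $P^n_k(y,A)=P(\tilde Y^n_k\in A\mid\tilde Y^n_{k-1}=y)$, and define for $t>0,y\in\mathbb R^d$ $$a_n(t,y)=n\,\mathbb E[\tilde Y^n_{\lfloor nt\rfloor}-\tilde Y^n_{\lfloor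 nt\rfloor-1}\mid\tilde Y^n_{\lfloor nt\rfloor-1}=y],$$ $$b_n(t,y)=n\,\mathbb E[(\tilde Y^n_{\lfloor nt\rfloor}-\tilde Y^n_{\lfloor nt\rfloor-1})(\tilde Y^n_{\lfloor nt\rfloor}-\tilde Y^n_{\lfloor nt\rfloor-1})^\top\mid\tilde Y^n_{\lfloor nt\rfloor-1}=y],$$ and $a(t,y)=t^{-1}(I_d-\delta\nabla^2\Phi(\theta^* ))y$. Fix $R,r>0$ and $0<\varepsilon<T$. Then as $n\to\infty$: (i) $\sup_{\varepsilon\le t\le T,\ y\in B(\theta^*,R)} nP^n_{\lfloor nt\rfloor}(y,B(y,r)^\complement)\to0$; (ii) $\sup_{\varepsilon\le t\le T,\ y\in B(\theta^*,R)}\|a_n(t,y)-a(t,y)\|\to0$; (iii) $\sup_{\varepsilon\le t\le T,\ y\in B(\theta^*,R)}\|b_n(t,y)-\delta^2\Gamma\|\to0$.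
   Context: $B(x,\rho)$ denotes the open Euclidean ball of center $x$ and radius $\rho$. *)

theory Defs
  imports "HOL-Probability.Probability"
begin

text \<open>Outer product u v^T as a d x d matrix.\<close>
definition outer :: "real^'d \<Rightarrow> real^'d \<Rightarrow> real^'d^'d" where
  "outer u v = (\<chi> i j. u$i * v$j)"

text \<open>Smallest (real) eigenvalue of a square matrix.\<close>
definition min_eigenvalue :: "real^'d^'d \<Rightarrow> real" where
  "min_eigenvalue A = Min {lam. \<exists>v. v \<noteq> 0 \<and> A *v v = lam *\<^sub>R v}"

text \<open>Phi is C^2 on an open neighbourhood of th0 and its Hessian at th0 is H.\<close>
definition C2_near_with_hessian ::
  "(real^'d \<Rightarrow> real) \<Rightarrow> real^'d \<Rightarrow> real^'d^'d \<Rightarrow> bool" where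
  "C2_near_with_hessian Phi th0 H \<longleftrightarrow>
     (\<exists>U grad Hess. open U \<and> th0 \<in> U \<and>
        (\<forall>th\<in>U. (Phi has_derivative (\<lambda>v. grad th \<bullet> v)) (at th)) \<and>
        (\<forall>th\<in>U. (grad has_derivative (\<lambda>v. Hess th *v v)) (at th)) \<and>
        continuous_on U Hess \<and> Hess th0 = H)"

definition pos_def_matrix :: "real^'d^'d \<Rightarrow> bool" where
  "pos_def_matrix A \<longleftrightarrow> (\<forall>v. v \<noteq> 0 \<longrightarrow> v \<bullet> (A *v v) > 0)"

text \<open>theta_{k-1} as a function of the state y = Y^n_{k-1}
  (for k = 1 the previous iterate is the deterministic theta_0).\<close>
definition sgd_prev :: "real^'d \<Rightarrow> real^'d \<Rightarrow> nat \<Rightarrow> nat \<Rightarrow> real^'d \<Rightarrow> real^'d" where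
  "sgd_prev ths th0 n k y =
     (if k \<le> 1 then th0 else ths + (sqrt (real n) / real (k - 1)) *\<^sub>R y)"

text \<open>Y^n_k as a function of Y^n_{k-1} = y and of the fresh sample X_k = x.\<close>
definition sgd_step ::
  "('e \<Rightarrow> real^'d \<Rightarrow> real^'d) \<Rightarrow> real \<Rightarrow> real^'d \<Rightarrow> real^'d \<Rightarrow>
   nat \<Rightarrow> nat \<Rightarrow> real^'d \<Rightarrow> 'e \<Rightarrow> real^'d" where
  "sgd_step g \<delta> ths th0 n k y x =
     (let thp = sgd_prev ths th0 n k y
      in (real k / sqrt (real n)) *\<^sub>R ((thp - (\<delta> / real k) *\<^sub>R g x thp) - ths))"

text \<open>Transition kernel P^n_k(y,A) = P(Y^n_k \<in> A | Y^n_{k-1} = y), X_k ~ M.\<close>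
definition sgd_kernel ::
  "'e measure \<Rightarrow> ('e \<Rightarrow> real^'d \<Rightarrow> real^'d) \<Rightarrow> real \<Rightarrow> real^'d \<Rightarrow> real^'d \<Rightarrow>
   nat \<Rightarrow> nat \<Rightarrow> real^'d \<Rightarrow> (real^'d) set \<Rightarrow> real" where
  "sgd_kernel M g \<delta> ths th0 n k y A =
     measure M {x \<in> space M. sgd_step g \<delta> ths th0 n k y x \<in> A}"

text \<open>a_n(t,y)\<close>
definition sgd_drift ::
  "'e measure \<Rightarrow> ('e \<Rightarrow> real^'d \<Rightarrow> real^'d) \<Rightarrow> real \<Rightarrow> real^'d \<Rightarrow> real^'d \<Rightarrow>
   nat \<Rightarrow> real \<Rightarrow> real^'d \<Rightarrow> real^'d" where
  "sgd_drift M g \<delta> ths th0 n t y =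
     real n *\<^sub>R (\<integral>x. (sgd_step g \<delta> ths th0 n (nat \<lfloor>real n * t\<rfloor>) y x - y) \<partial>M)"

text \<open>b_n(t,y)\<close>
definition sgd_diffusion ::
  "'e measure \<Rightarrow> ('e \<Rightarrow> real^'d \<Rightarrow> real^'d) \<Rightarrow> real \<Rightarrow> real^'d \<Rightarrow> real^'d \<Rightarrow>
   nat \<Rightarrow> real \<Rightarrow> real^'d \<Rightarrow> real^'d^'d" where
  "sgd_diffusion M g \<delta> ths th0 n t y =
     real n *\<^sub>R (\<integral>x. outer (sgd_step g \<delta> ths th0 n (nat \<lfloor>real n * t\<rfloor>) y x - y)
                           (sgd_step g \<delta> ths th0 n (nat \<lfloor>real n * t\<rfloor>) y x - y) \<partial>M)"

end

theory Submission
  imports Defs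
begin

lemma outer_norm: "norm (outer u v) = norm u * norm v"
proof -
  have "norm (outer u v) = L2_set (\<lambda>i. norm (outer u v $ i)) UNIV" by (simp add: norm_vec_def)
  also have "\<dots> = L2_set (\<lambda>i. \<bar>u$i\<bar> * norm v) UNIV"
  proof -
    have "outer u v $ i = (u$i) *\<^sub>R v" for i by (simp add: outer_def vec_eq_iff)
    then show ?thesis by simp
  qed
  also have "\<dots> = L2_set (\<lambda>i. \<bar>u$i\<bar>) UNIV * norm v" by (simp add: L2_set_left_distrib)
  also have "\<dots> = norm u * norm v" by (simp add: norm_vec_def)
  finally show ?thesis .
qed
lemma outer_bl_right: "bounded_linear (outer u)"
  by (rule linear_conv_bounded_linear[THEN iffD1]) (auto intro!: linearI simp: outer_def vec_eq_iff algebra_simps)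
lemma outer_bl_left: "bounded_linear (\<lambda>v. outer v u)"
  by (rule linear_conv_bounded_linear[THEN iffD1]) (auto intro!: linearI simp: outer_def vec_eq_iff algebra_simps)
lemma outer_expand: "outer (u - c *\<^sub>R w) (u - c *\<^sub>R w) = outer u u - c *\<^sub>R (outer u w + outer w u) + c\<^sup>2 *\<^sub>R outer w w"
  by (simp add: outer_def vec_eq_iff algebra_simps power2_eq_square)
lemma outer_cont: "continuous_on UNIV (\<lambda>v::real^'d. outer v v)"
  unfolding outer_def by (intro continuous_intros)

lemma sup_to_zero:
  fixes F :: "nat \<Rightarrow> 'p \<Rightarrow> real"
  assumes ne: "A \<noteq> {}" and ev: "\<And>e. e > 0 \<Longrightarrow> eventually (\<lambda>n. \<forall>p\<in>A. F n p \<le> e) sequentially"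
    and nn: "\<And>n p. 0 \<le> F n p"
  shows "((\<lambda>n. SUP p\<in>A. ereal (F n p)) \<longlongrightarrow> 0) sequentially"
proof (rule order_tendstoI)
  fix a :: ereal assume "a < 0"
  from ne obtain p0 where p0: "p0 \<in> A" by auto
  show "eventually (\<lambda>n. a < (SUP p\<in>A. ereal (F n p))) sequentially"
  proof (intro always_eventually allI)
    fix n
    have "a < ereal (F n p0)" using \<open>a < 0\<close> nn[of n p0] by (metis ereal_less_eq(5) order_less_le_trans)
    also have "\<dots> \<le> (SUP p\<in>A. ereal (F n p))" using p0 by (rule SUP_upper)
    finally show "a < (SUP p\<in>A. ereal (F n p))" .
  qed
next
  fix a :: ereal assume "0 < a"
  then obtain e where e: "e > 0" "ereal e < a"
    by (metis ereal_dense2 ereal_less(2) less_ereal.simps(1) order_less_trans)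
  show "eventually (\<lambda>n. (SUP p\<in>A. ereal (F n p)) < a) sequentially"
    using ev[OF e(1)]
  proof eventually_elim
    case (elim n)
    have "(SUP p\<in>A. ereal (F n p)) \<le> ereal e" using elim by (auto intro!: SUP_least)
    then show ?case using e(2) by simp
  qed
qed

lemma step_formula:
  assumes "n > 0" "k \<ge> 2"
  shows "sgd_step g \<delta> ths th0 n k y x - y =
     (1 / real (k - 1)) *\<^sub>R y - (\<delta> / sqrt (real n)) *\<^sub>R g x (ths + (sqrt (real n) / real (k - 1)) *\<^sub>R y)"
proof -
  have sn: "sqrt (real n) > 0" using assms by simp
  have k1: "real (k - 1) = real k - 1" using assms by simp
  have kpos: "real k - 1 > 0" using assms by simp
  have p: "sgd_prev ths th0 n k y = ths + (sqrt (real n) / real (k - 1)) *\<^sub>R y"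
    using assms by (simp add: sgd_prev_def)
  define K where "K = real k"
  define sn where "sn = sqrt (real n)"
  define G where "G = g x (ths + (sn / (K - 1)) *\<^sub>R y)"
  have Kp: "K > 0" "K - 1 > 0" using kpos assms unfolding K_def by auto
  have snp: "sn > 0" using sn unfolding sn_def .
  have c1: "(K / sn) * (sn / (K - 1)) = 1 + 1 / (K - 1)" using Kp snp by (simp add: field_simps)
  have c2: "(K / sn) * (\<delta> / K) = \<delta> / sn" using Kp snp by (simp add: field_simps)
  have "sgd_step g \<delta> ths th0 n k y x - y = (K / sn) *\<^sub>R ((sn / (K - 1)) *\<^sub>R y - (\<delta> / K) *\<^sub>R G) - y"
    unfolding sgd_step_def Let_def p k1 K_def[symmetric] sn_def[symmetric] G_def by (simp add: algebra_simps)
  also have "\<dots> = ((K / sn) * (sn / (K - 1))) *\<^sub>R y - ((K / sn) * (\<delta> / K)) *\<^sub>R G - y"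
    by (simp add: scaleR_diff_right)
  also have "\<dots> = (1 / (K - 1)) *\<^sub>R y - (\<delta> / sn) *\<^sub>R G" unfolding c1 c2 by (simp add: algebra_simps)
  finally show ?thesis unfolding K_def sn_def G_def k1 .
qed

lemma kbounds:
  fixes n :: nat and t \<epsilon> :: real
  assumes "real n * \<epsilon> \<ge> 4" "\<epsilon> \<le> t" "\<epsilon> > 0"
  shows "nat \<lfloor>real n * t\<rfloor> \<ge> 2" "real (nat \<lfloor>real n * t\<rfloor> - 1) \<ge> real n * \<epsilon> / 2"
    "real (nat \<lfloor>real n * t\<rfloor> - 1) \<ge> real n * t / 2"
    "\<bar>real n / real (nat \<lfloor>real n * t\<rfloor> - 1) - 1 / t\<bar> \<le> 4 / (\<epsilon>\<^sup>2 * real n)"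
proof -
  define k where "k = nat \<lfloor>real n * t\<rfloor>"
  have nt: "real n * t \<ge> real n * \<epsilon>" using assms by (intro mult_left_mono) auto
  have "real k \<le> real n * t" "real n * t < real k + 1"
    unfolding k_def using nt assms by linarith+
  then have kge: "k \<ge> 2" using nt assms by linarith
  have k1: "real (k - 1) = real k - 1" using kge by simp
  have A: "real (k - 1) \<ge> real n * t / 2" unfolding k1 using \<open>real n * t < real k + 1\<close> nt assms by linarith
  moreover have B: "real (k - 1) \<ge> real n * \<epsilon> / 2" using A nt by linarith
  moreover have "\<bar>real n / real (k - 1) - 1 / t\<bar> \<le> 4 / (\<epsilon>\<^sup>2 * real n)"
  proof -
    have tp: "t > 0" using assms by linarith
    have kp: "real (k - 1) > 0" using kge by simp
    have np: "real n > 0" proof (rule ccontr)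
      assume "\<not> real n > 0" then have "n = 0" by simp
      with assms show False by simp
    qed
    have eq: "real n / real (k - 1) - 1 / t = (real n * t - real (k - 1)) / (t * real (k - 1))"
      using tp kp by (simp add: field_simps)
    have num: "0 \<le> real n * t - real (k - 1)" "real n * t - real (k - 1) \<le> 2"
      unfolding k1 using \<open>real k \<le> real n * t\<close> \<open>real n * t < real k + 1\<close> by linarith+
    have den: "t * real (k - 1) \<ge> \<epsilon> * (real n * \<epsilon> / 2)"
      using B assms tp by (intro mult_mono) auto
    have den0: "\<epsilon> * (real n * \<epsilon> / 2) > 0" using assms np by simp
    have "\<bar>(real n * t - real (k - 1)) / (t * real (k - 1))\<bar> = (real n * t - real (k - 1)) / (t * real (k - 1))"
      using num tp kp by simp
    also have "\<dots> \<le> 2 / (t * real (k - 1))" using num tp kp by (intro divide_right_mono) auto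
    also have "\<dots> \<le> 2 / (\<epsilon> * (real n * \<epsilon> / 2))" proof (rule divide_left_mono[OF den])
      show "0 < (t * real (k - 1)) * (\<epsilon> * (real n * \<epsilon> / 2))" using tp kp by (intro mult_pos_pos[OF _ den0]) simp
    qed simp
    also have "\<dots> = 4 / (\<epsilon>\<^sup>2 * real n)" by (simp add: power2_eq_square field_simps)
    finally show ?thesis using eq by simp
  qed
  ultimately show "nat \<lfloor>real n * t\<rfloor> \<ge> 2" "real (nat \<lfloor>real n * t\<rfloor> - 1) \<ge> real n * \<epsilon> / 2"
    "real (nat \<lfloor>real n * t\<rfloor> - 1) \<ge> real n * t / 2"
    "\<bar>real n / real (nat \<lfloor>real n * t\<rfloor> - 1) - 1 / t\<bar> \<le> 4 / (\<epsilon>\<^sup>2 * real n)"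
    using kge unfolding k_def by auto
qed

lemma subgrad_eq:
  fixes f :: "'a::real_inner \<Rightarrow> real"
  assumes d: "(f has_derivative (\<lambda>v. a \<bullet> v)) (at z)"
    and sg: "\<And>z'. f z' \<ge> f z + b \<bullet> (z' - z)"
  shows "a = b"
proof -
  have db: "((\<lambda>z'. b \<bullet> (z' - z)) has_derivative (\<lambda>v. b \<bullet> v)) (at z)"
    by (auto intro!: derivative_eq_intros)
  have d2: "((\<lambda>z'. f z' - b \<bullet> (z' - z)) has_derivative (\<lambda>v. a \<bullet> v - b \<bullet> v)) (at z)"
    by (rule has_derivative_diff[OF d db])
  have "(\<lambda>v. a \<bullet> v - b \<bullet> v) = (\<lambda>v. 0)"
    proof (rule has_derivative_local_min[OF d2], intro always_eventually allI)
    fix z' show "f z - b \<bullet> (z - z) \<le> f z' - b \<bullet> (z' - z)" using sg[of z'] by simp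
  qed
  then have "a \<bullet> (a - b) - b \<bullet> (a - b) = 0" by metis
  then have "(a - b) \<bullet> (a - b) = 0" by (simp add: inner_diff_left)
  then show ?thesis by simp
qed

lemma dir_upper:
  fixes f :: "real^'d \<Rightarrow> real" and gg :: "real^'d \<Rightarrow> real^'d"
  assumes cont: "continuous_on UNIV f"
    and sg: "\<And>\<theta> \<theta>'. f \<theta>' \<ge> f \<theta> + gg \<theta> \<bullet> (\<theta>' - \<theta>)"
    and t: "t > 0" and te: "(f (z + t *\<^sub>R w) - f z) / t \<le> gg z \<bullet> w + e" and e: "e > 0"
    and v: "v \<longlonglongrightarrow> z"
  shows "eventually (\<lambda>m. gg (v m) \<bullet> w < gg z \<bullet> w + 2 * e) sequentially"
proof -
  have ic: "isCont f p" for p using cont by (simp add: continuous_on_eq_continuous_at)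
  have "(\<lambda>m. v m + t *\<^sub>R w) \<longlonglongrightarrow> z + t *\<^sub>R w" using v by (intro tendsto_intros)
  then have l1: "(\<lambda>m. f (v m + t *\<^sub>R w)) \<longlonglongrightarrow> f (z + t *\<^sub>R w)" by (rule isCont_tendsto_compose[OF ic])
  have l2: "(\<lambda>m. f (v m)) \<longlonglongrightarrow> f z" using v by (rule isCont_tendsto_compose[OF ic])
  have "(\<lambda>m. (f (v m + t *\<^sub>R w) - f (v m)) / t) \<longlonglongrightarrow> (f (z + t *\<^sub>R w) - f z) / t"
    using l1 l2 t by (intro tendsto_intros) auto
  then have ev: "eventually (\<lambda>m. (f (v m + t *\<^sub>R w) - f (v m)) / t < (f (z + t *\<^sub>R w) - f z) / t + e) sequentially"
    using e by (intro order_tendstoD(2)) auto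
  then show ?thesis
  proof eventually_elim
    case (elim m)
    have "f (v m + t *\<^sub>R w) \<ge> f (v m) + gg (v m) \<bullet> (t *\<^sub>R w)" using sg[of "v m" "v m + t *\<^sub>R w"] by simp
    then have "t * (gg (v m) \<bullet> w) \<le> f (v m + t *\<^sub>R w) - f (v m)" by simp
    then have "gg (v m) \<bullet> w \<le> (f (v m + t *\<^sub>R w) - f (v m)) / t" using t by (simp add: field_simps)
    then show ?case using elim te by linarith
  qed
qed

lemma conv_pointwise:
  fixes f :: "real^'d \<Rightarrow> real" and gg :: "real^'d \<Rightarrow> real^'d"
  assumes cvx: "convex_on UNIV f"
    and sg: "\<And>\<theta> \<theta>'. f \<theta>' \<ge> f \<theta> + gg \<theta> \<bullet> (\<theta>' - \<theta>)"
    and dir: "\<And>i w e. w \<in> {axis i 1, - axis i 1} \<Longrightarrow> e > 0 \<Longrightarrow> \<exists>t>0. (f (z + t *\<^sub>R w) - f z) / t \<le> gg z \<bullet> w + e"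
    and v: "v \<longlonglongrightarrow> z"
  shows "(\<lambda>m. gg (v m)) \<longlonglongrightarrow> gg z"
proof (rule vec_tendstoI)
  fix i
  have cont: "continuous_on UNIV f" using cvx by (intro convex_on_continuous) auto
  have up: "eventually (\<lambda>m. gg (v m) \<bullet> w < gg z \<bullet> w + 2 * e) sequentially" if w1: "w \<in> {axis i 1, - axis i 1}" and e0: "e > 0" for w e
  proof -
    obtain t where "t > 0" "(f (z + t *\<^sub>R w) - f z) / t \<le> gg z \<bullet> w + e" using dir[OF w1 e0] by blast
    then show ?thesis using dir_upper[OF cont sg _ _ e0 v] by blast
  qed
  show "(\<lambda>m. gg (v m) $ i) \<longlonglongrightarrow> gg z $ i"
  proof (rule tendstoI)
    fix e :: real assume e: "e > 0"
    have n1: "axis i (1::real) \<in> {axis i 1, - axis i 1}" by simp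
    have n2: "- axis i (1::real) \<in> {axis i 1, - axis i 1}" by simp
    have e3: "e / 3 > 0" using e by simp
    from up[OF n1 e3] up[OF n2 e3]
    show "eventually (\<lambda>m. dist (gg (v m) $ i) (gg z $ i) < e) sequentially"
    proof eventually_elim
      case (elim m)
      then show ?case using e by (simp add: inner_axis dist_real_def abs_less_iff)
    qed
  qed
qed

lemma geom:
  fixes n :: nat and t \<epsilon> c0 :: real and y :: "real^'d"
  assumes n: "real n * \<epsilon> \<ge> 4" and t: "\<epsilon> \<le> t" and e: "\<epsilon> > 0" and y: "norm y \<le> c0"
    and kk: "kk \<ge> real n * \<epsilon> / 2"
  shows "norm ((sqrt (real n) / kk) *\<^sub>R y) \<le> 2 * c0 / (\<epsilon> * sqrt (real n))"
    "sqrt (real n) * norm ((sqrt (real n) / kk) *\<^sub>R y) \<le> 2 * c0 / \<epsilon>"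
    "norm ((1 / kk) *\<^sub>R y) \<le> 2 * c0 / (real n * \<epsilon>)"
    "real n * norm ((1 / kk) *\<^sub>R y) \<le> 2 * c0 / \<epsilon>"
proof -
  have np: "real n > 0"
  proof (rule ccontr)
    assume "\<not> real n > 0" then have "n = 0" by simp
    with n show False by simp
  qed
  have sn: "sqrt (real n) > 0" using np by simp
  have ssq: "sqrt (real n) * sqrt (real n) = real n" using np by simp
  have "real n * \<epsilon> > 0" using np e by simp
  note nep = this
  then have kkp: "kk > 0" using kk by linarith
  have c0: "c0 \<ge> 0" using y norm_ge_zero[of y] by linarith
  have b0: "1 / kk \<le> 1 / (real n * \<epsilon> / 2)"
    by (rule divide_left_mono[OF kk]) (use kkp nep in auto)
  have b1: "1 / kk \<le> 2 / (real n * \<epsilon>)" using b0 by simp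
  have "norm ((1 / kk) *\<^sub>R y) = (1 / kk) * norm y" using kkp by simp
  also have "\<dots> \<le> (2 / (real n * \<epsilon>)) * c0" using b1 y kkp nep by (intro mult_mono) auto
  finally show U: "norm ((1 / kk) *\<^sub>R y) \<le> 2 * c0 / (real n * \<epsilon>)" by simp
  have "real n * norm ((1 / kk) *\<^sub>R y) \<le> real n * (2 * c0 / (real n * \<epsilon>))"
    using U np by (intro mult_left_mono) auto
  also have "\<dots> = 2 * c0 / \<epsilon>" using np by simp
  finally show "real n * norm ((1 / kk) *\<^sub>R y) \<le> 2 * c0 / \<epsilon>" .
  have "norm ((sqrt (real n) / kk) *\<^sub>R y) = sqrt (real n) * ((1 / kk) * norm y)" using kkp sn by simp
  also have "\<dots> \<le> sqrt (real n) * ((2 / (real n * \<epsilon>)) * c0)" using b1 y kkp sn nep by (intro mult_left_mono mult_mono) auto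
  also have "\<dots> = 2 * c0 / (\<epsilon> * sqrt (real n))" proof -
    have "sqrt (real n) * (2 / (real n * \<epsilon>) * c0) = 2 * c0 * sqrt (real n) / (sqrt (real n) * sqrt (real n) * \<epsilon>)"
      unfolding ssq by simp
    also have "\<dots> = 2 * c0 / (\<epsilon> * sqrt (real n))" using sn by (simp add: divide_simps)
    finally show ?thesis .
  qed
  finally show A: "norm ((sqrt (real n) / kk) *\<^sub>R y) \<le> 2 * c0 / (\<epsilon> * sqrt (real n))" .
  have "sqrt (real n) * norm ((sqrt (real n) / kk) *\<^sub>R y) \<le> sqrt (real n) * (2 * c0 / (\<epsilon> * sqrt (real n)))"
    using A sn by (intro mult_left_mono) auto
  also have "\<dots> = 2 * c0 / \<epsilon>" using sn by simp
  finally show "sqrt (real n) * norm ((sqrt (real n) / kk) *\<^sub>R y) \<le> 2 * c0 / \<epsilon>" .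
qed

lemma ev_div_n: "d > 0 \<Longrightarrow> eventually (\<lambda>n. C / real n < d) sequentially"
proof -
  assume d: "d > 0"
  have "((\<lambda>n. C / real n) \<longlongrightarrow> 0) sequentially"
    by (intro tendsto_divide_0[OF tendsto_const] filterlim_at_top_imp_at_infinity filterlim_real_sequentially)
  then show ?thesis using d by (intro order_tendstoD(2)) auto
qed

lemma ev_div_sqrt: "d > 0 \<Longrightarrow> eventually (\<lambda>n. C / sqrt (real n) < d) sequentially"
proof -
  assume d: "d > 0"
  have "filterlim (\<lambda>n. sqrt (real n)) at_top sequentially"
    by (rule filterlim_compose[OF sqrt_at_top filterlim_real_sequentially])
  then have "((\<lambda>n. C / sqrt (real n)) \<longlongrightarrow> 0) sequentially"
    by (intro tendsto_divide_0[OF tendsto_const] filterlim_at_top_imp_at_infinity)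
  then show ?thesis using d by (intro order_tendstoD(2)) auto
qed

lemma ev_ge: "eventually (\<lambda>n. real n \<ge> C) sequentially"
  using filterlim_real_sequentially by (simp add: filterlim_at_top)

lemma drift_alg:
  fixes H :: "real^'d^'d" and y G :: "real^'d"
  assumes s: "\<sigma> > 0" and kk: "kk > 0" and t: "t > 0"
  shows "(\<sigma>*\<sigma>) *\<^sub>R ((1/kk) *\<^sub>R y - (\<delta>/\<sigma>) *\<^sub>R G) - (1/t) *\<^sub>R ((mat 1 - \<delta> *\<^sub>R H) *v y)
       = ((\<sigma>*\<sigma>)/kk - 1/t) *\<^sub>R (y - \<delta> *\<^sub>R (H *v y)) - (\<delta>*\<sigma>) *\<^sub>R (G - H *v ((\<sigma>/kk) *\<^sub>R y))"
proof -
  have m: "(mat 1 - \<delta> *\<^sub>R H) *v y = y - \<delta> *\<^sub>R (H *v y)"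
    by (simp add: matrix_vector_mult_diff_rdistrib scaleR_matrix_vector_assoc)
  have l: "H *v ((\<sigma>/kk) *\<^sub>R y) = (\<sigma>/kk) *\<^sub>R (H *v y)"
    by (rule linear_scale[OF matrix_vector_mul_linear])
  have c1: "(\<sigma>*\<sigma>) * (\<delta>/\<sigma>) = \<delta>*\<sigma>" using s by (simp add: field_simps)
  have c2: "(\<delta>*\<sigma>) * (\<sigma>/kk) = \<delta> * ((\<sigma>*\<sigma>)/kk)" by (simp add: field_simps)
  show ?thesis unfolding m l
    by (simp add: scaleR_diff_right scaleR_diff_left c1 c2 algebra_simps)
qed

lemma diff_alg:
  fixes u G :: "real^'d" and Mp M0 :: "real^'d^'d"
  assumes s: "\<sigma> > 0"
  shows "(\<sigma>*\<sigma>) *\<^sub>R (outer u u - (\<delta>/\<sigma>) *\<^sub>R (outer u G + outer G u) + (\<delta>/\<sigma>)\<^sup>2 *\<^sub>R Mp) - \<delta>\<^sup>2 *\<^sub>R M0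
        = (\<sigma>*\<sigma>) *\<^sub>R outer u u - (\<delta>*\<sigma>) *\<^sub>R (outer u G + outer G u) + \<delta>\<^sup>2 *\<^sub>R (Mp - M0)"
proof -
  have c1: "(\<sigma>*\<sigma>) * (\<delta>/\<sigma>) = \<delta>*\<sigma>" using s by (simp add: field_simps)
  have c2: "(\<sigma>*\<sigma>) * (\<delta>/\<sigma>)\<^sup>2 = \<delta>\<^sup>2" using s by (simp add: power2_eq_square)
  have "(\<sigma>*\<sigma>) *\<^sub>R (outer u u - (\<delta>/\<sigma>) *\<^sub>R (outer u G + outer G u) + (\<delta>/\<sigma>)\<^sup>2 *\<^sub>R Mp) - \<delta>\<^sup>2 *\<^sub>R M0
     = (\<sigma>*\<sigma>) *\<^sub>R outer u u - ((\<sigma>*\<sigma>) * (\<delta>/\<sigma>)) *\<^sub>R (outer u G + outer G u) + ((\<sigma>*\<sigma>) * (\<delta>/\<sigma>)\<^sup>2) *\<^sub>R Mp - \<delta>\<^sup>2 *\<^sub>R M0"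
    by (simp only: scaleR_diff_right scaleR_add_right scaleR_scaleR)
  also have "\<dots> = (\<sigma>*\<sigma>) *\<^sub>R outer u u - (\<delta>*\<sigma>) *\<^sub>R (outer u G + outer G u) + \<delta>\<^sup>2 *\<^sub>R Mp - \<delta>\<^sup>2 *\<^sub>R M0"
    unfolding c1 c2 ..
  also have "\<dots> = (\<sigma>*\<sigma>) *\<^sub>R outer u u - (\<delta>*\<sigma>) *\<^sub>R (outer u G + outer G u) + \<delta>\<^sup>2 *\<^sub>R (Mp - M0)"
    by (simp add: scaleR_diff_right algebra_simps)
  finally show ?thesis .
qed

lemma le_one_plus_sq: "(z::real) \<le> 1 + z\<^sup>2"
proof -
  have "0 \<le> (z - 1/2)\<^sup>2" by simp
  then show ?thesis by (simp add: power2_eq_square algebra_simps)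
qed
theorem proposition2:
  fixes M :: "'e measure"
    and \<phi> :: "'e \<Rightarrow> real^'d \<Rightarrow> real"
    and g :: "'e \<Rightarrow> real^'d \<Rightarrow> real^'d"
    and \<Phi> :: "real^'d \<Rightarrow> real"
    and G :: "real^'d \<Rightarrow> real^'d"
    and ths th0 :: "real^'d"
    and H \<Gamma> :: "real^'d^'d"
    and L \<eta> \<delta> R r \<epsilon> T :: real
  assumes M: "prob_space M"
    and phi_meas: "\<And>\<theta>. (\<lambda>x. \<phi> x \<theta>) \<in> borel_measurable M"
    and phi_convex: "\<And>x. x \<in> space M \<Longrightarrow> convex_on UNIV (\<phi> x)"
    and phi_int: "\<And>\<theta>. integrable M (\<lambda>x. \<phi> x \<theta>)"
    and g_meas: "\<And>\<theta>. (\<lambda>x. g x \<theta>) \<in> borel_measurable M"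
    and g_subgrad: "AE x in M. \<forall>\<theta> \<theta>'. \<phi> x \<theta>' \<ge> \<phi> x \<theta> + g x \<theta> \<bullet> (\<theta>' - \<theta>)"
    and Phi_def: "\<Phi> = (\<lambda>\<theta>. \<integral>x. \<phi> x \<theta> \<partial>M)"
    and G_def: "G = (\<lambda>\<theta>. \<integral>x. g x \<theta> \<partial>M)"
    and min: "\<forall>\<theta>. \<Phi> ths \<le> \<Phi> \<theta>"
    and min_unique: "\<forall>\<theta>. (\<forall>\<theta>'. \<Phi> \<theta> \<le> \<Phi> \<theta>') \<longrightarrow> \<theta> = ths"
    and C2: "C2_near_with_hessian \<Phi> ths H"
    and posdef: "pos_def_matrix H"
    and L: "L > 0" "\<forall>\<theta>. norm (G \<theta>) \<le> L * norm (\<theta> - ths)"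
    and eta: "\<eta> > 0"
    and sup_meas: "(\<lambda>x. SUP \<theta>\<in>ball ths \<eta>. ennreal ((norm (g x \<theta> - G \<theta>))\<^sup>2)) \<in> borel_measurable M"
    and sup_fin: "(\<integral>\<^sup>+x. (SUP \<theta>\<in>ball ths \<eta>. ennreal ((norm (g x \<theta> - G \<theta>))\<^sup>2)) \<partial>M) < \<infinity>"
    and Gamma_fin: "integrable M (\<lambda>x. outer (g x ths) (g x ths))"
    and Gamma_def: "\<Gamma> = (\<integral>x. outer (g x ths) (g x ths) \<partial>M)"
    and delta: "\<delta> > 1 / min_eigenvalue H"
    and Rr: "R > 0" "r > 0"
    and epsT: "0 < \<epsilon>" "\<epsilon> < T"
  shows
    "((\<lambda>n::nat. SUP p\<in>{\<epsilon>..T} \<times> ball ths R.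
        ereal (real n * sgd_kernel M g \<delta> ths th0 n (nat \<lfloor>real n * fst p\<rfloor>) (snd p)
                         (- ball (snd p) r))) \<longlongrightarrow> 0) sequentially
   \<and> ((\<lambda>n::nat. SUP p\<in>{\<epsilon>..T} \<times> ball ths R.
        ereal (norm (sgd_drift M g \<delta> ths th0 n (fst p) (snd p)
                     - (1 / fst p) *\<^sub>R ((mat 1 - \<delta> *\<^sub>R H) *v snd p)))) \<longlongrightarrow> 0) sequentially
   \<and> ((\<lambda>n::nat. SUP p\<in>{\<epsilon>..T} \<times> ball ths R.
        ereal (norm (sgd_diffusion M g \<delta> ths th0 n (fst p) (snd p) - \<delta>\<^sup>2 *\<^sub>R \<Gamma>))) \<longlongrightarrow> 0) sequentially"
proof -
  interpret P: prob_space M by (rule M)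
  define S where "S x = (SUP \<theta>\<in>ball ths \<eta>. ennreal ((norm (g x \<theta> - G \<theta>))\<^sup>2))" for x
  define s where "s x = enn2real (S x)" for x
  have S_meas: "S \<in> borel_measurable M" using sup_meas unfolding S_def[abs_def] .
  have S_fin: "(\<integral>\<^sup>+x. S x \<partial>M) < \<infinity>" using sup_fin unfolding S_def .
  have AE_fin: "AE x in M. S x \<noteq> \<infinity>"
    by (rule nn_integral_noteq_infinite[OF S_meas]) (use S_fin in simp)
  have s_nn: "\<And>x. s x \<ge> 0" unfolding s_def by simp
  have s_meas: "s \<in> borel_measurable M" unfolding s_def[abs_def] using S_meas by measurable
  have s_int: "integrable M s"
  proof (rule integrableI_bounded[OF s_meas])
    have "(\<integral>\<^sup>+x. ennreal (norm (s x)) \<partial>M) \<le> (\<integral>\<^sup>+x. S x \<partial>M)"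
      by (intro nn_integral_mono) (simp add: s_def ennreal_enn2real_if)
    then show "(\<integral>\<^sup>+x. ennreal (norm (s x)) \<partial>M) < \<infinity>" using S_fin by (meson order.strict_trans1)
  qed
  have s_bound: "AE x in M. \<forall>\<theta>\<in>ball ths \<eta>. (norm (g x \<theta> - G \<theta>))\<^sup>2 \<le> s x"
    using AE_fin
  proof eventually_elim
    case (elim x)
    show ?case
    proof
      fix \<theta> assume th: "\<theta> \<in> ball ths \<eta>"
      have "ennreal ((norm (g x \<theta> - G \<theta>))\<^sup>2) \<le> S x" unfolding S_def using th by (rule SUP_upper)
      then have "enn2real (ennreal ((norm (g x \<theta> - G \<theta>))\<^sup>2)) \<le> enn2real (S x)"
        using elim by (intro enn2real_mono) (auto simp: less_top[symmetric])
      then show "(norm (g x \<theta> - G \<theta>))\<^sup>2 \<le> s x" unfolding s_def by simp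
    qed
  qed
  have G_bound: "\<And>\<theta>. norm (G \<theta>) \<le> L * norm (\<theta> - ths)" using L(2) by blast
  have G0: "G ths = 0" using G_bound[of ths] by simp
  have G_ball: "\<And>\<theta>. \<theta> \<in> ball ths \<eta> \<Longrightarrow> norm (G \<theta>) \<le> L * \<eta>"
  proof -
    fix \<theta> assume "\<theta> \<in> ball ths \<eta>"
    then have "norm (\<theta> - ths) \<le> \<eta>" by (simp add: dist_norm norm_minus_commute)
    then show "norm (G \<theta>) \<le> L * \<eta>" using G_bound[of \<theta>] L(1) by (meson mult_left_mono less_imp_le order_trans)
  qed
  have g_int: "integrable M (\<lambda>x. g x \<theta>)" if th: "\<theta> \<in> ball ths \<eta>" for \<theta>
  proof -
    have "integrable M (\<lambda>x. g x \<theta> - G \<theta>)"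
    proof (rule Bochner_Integration.integrable_bound[where f="\<lambda>x. 1 + s x"])
      show "integrable M (\<lambda>x. 1 + s x)" using s_int by simp
      show "(\<lambda>x. g x \<theta> - G \<theta>) \<in> borel_measurable M" using g_meas by measurable
      show "AE x in M. norm (g x \<theta> - G \<theta>) \<le> norm (1 + s x)"
        using s_bound
      proof eventually_elim
        case (elim x)
        have sq: "(norm (g x \<theta> - G \<theta>))\<^sup>2 \<le> s x" using elim th by blast
        have "norm (g x \<theta> - G \<theta>) \<le> 1 + (norm (g x \<theta> - G \<theta>))\<^sup>2"
          by (rule le_one_plus_sq)
        then show ?case using sq s_nn[of x] by simp
      qed
    qed
    then have "integrable M (\<lambda>x. (g x \<theta> - G \<theta>) + G \<theta>)" by (rule Bochner_Integration.integrable_add[OF _ P.integrable_const])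
    then show ?thesis by simp
  qed
  have g_sq: "AE x in M. (norm (g x \<theta>))\<^sup>2 \<le> 2 * s x + 2 * (L * \<eta>)\<^sup>2" if th: "\<theta> \<in> ball ths \<eta>" for \<theta>
    using s_bound
  proof eventually_elim
    case (elim x)
    have sq: "(norm (g x \<theta> - G \<theta>))\<^sup>2 \<le> s x" using elim th by blast
    have tri: "norm (g x \<theta>) \<le> norm (g x \<theta> - G \<theta>) + norm (G \<theta>)" by (metis diff_add_cancel norm_triangle_ineq)
    have GG: "norm (G \<theta>) \<le> L * \<eta>" using G_ball[OF th] .
    have "(norm (g x \<theta>))\<^sup>2 \<le> (norm (g x \<theta> - G \<theta>) + norm (G \<theta>))\<^sup>2"
      using tri by (intro power_mono) auto
    also have "\<dots> \<le> 2 * (norm (g x \<theta> - G \<theta>))\<^sup>2 + 2 * (norm (G \<theta>))\<^sup>2"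
      by (smt (verit) sum_squares_ge_zero power2_diff power2_sum zero_le_power2)
    also have "\<dots> \<le> 2 * s x + 2 * (L * \<eta>)\<^sup>2"
      using sq GG by (smt (verit) norm_ge_zero power_mono)
    finally show ?case .
  qed
  have outer_meas: "(\<lambda>x. outer (g x \<theta>) (g x \<theta>)) \<in> borel_measurable M" for \<theta>
    by (rule borel_measurable_continuous_on[OF outer_cont g_meas])
  have outer_int: "integrable M (\<lambda>x. outer (g x \<theta>) (g x \<theta>))" if th: "\<theta> \<in> ball ths \<eta>" for \<theta>
  proof (rule Bochner_Integration.integrable_bound[where f="\<lambda>x. 2 * s x + 2 * (L * \<eta>)\<^sup>2"])
    show "integrable M (\<lambda>x. 2 * s x + 2 * (L * \<eta>)\<^sup>2)" using s_int by simp
    show "(\<lambda>x. outer (g x \<theta>) (g x \<theta>)) \<in> borel_measurable M" by (rule outer_meas)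
    show "AE x in M. norm (outer (g x \<theta>) (g x \<theta>)) \<le> norm (2 * s x + 2 * (L * \<eta>)\<^sup>2)"
      using g_sq[OF th] by eventually_elim (simp add: outer_norm power2_eq_square)
  qed
  have Phi_sub: "\<Phi> \<theta>' \<ge> \<Phi> \<theta> + G \<theta> \<bullet> (\<theta>' - \<theta>)" if th: "\<theta> \<in> ball ths \<eta>" for \<theta> \<theta>'
  proof -
    have "G \<theta> \<bullet> (\<theta>' - \<theta>) = (\<integral>x. g x \<theta> \<bullet> (\<theta>' - \<theta>) \<partial>M)"
      unfolding G_def using g_int[OF th] by simp
    also have "\<dots> \<le> (\<integral>x. \<phi> x \<theta>' - \<phi> x \<theta> \<partial>M)"
    proof (rule integral_mono_AE)
      show "integrable M (\<lambda>x. g x \<theta> \<bullet> (\<theta>' - \<theta>))" using g_int[OF th] by (intro integrable_inner_left)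
      show "integrable M (\<lambda>x. \<phi> x \<theta>' - \<phi> x \<theta>)" using phi_int by simp
      show "AE x in M. g x \<theta> \<bullet> (\<theta>' - \<theta>) \<le> \<phi> x \<theta>' - \<phi> x \<theta>"
        using g_subgrad by eventually_elim (smt (verit))
    qed
    also have "\<dots> = \<Phi> \<theta>' - \<Phi> \<theta>" unfolding Phi_def using phi_int by simp
    finally show ?thesis by simp
  qed
  have G_deriv: "(G has_derivative (\<lambda>v. H *v v)) (at ths)"
  proof -
    from C2 obtain U grad Hess where U: "open U" "ths \<in> U"
      and dPhi: "\<forall>th\<in>U. (\<Phi> has_derivative (\<lambda>v. grad th \<bullet> v)) (at th)"
      and dgrad: "\<forall>th\<in>U. (grad has_derivative (\<lambda>v. Hess th *v v)) (at th)"
      and HH: "Hess ths = H"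
      unfolding C2_near_with_hessian_def by blast
    have eq: "grad \<theta> = G \<theta>" if "\<theta> \<in> U \<inter> ball ths \<eta>" for \<theta>
      using that dPhi Phi_sub by (intro subgrad_eq[where f=\<Phi> and z=\<theta>]) auto
    have "(grad has_derivative (\<lambda>v. H *v v)) (at ths)" using dgrad U HH by auto
    then show ?thesis
      by (rule has_derivative_transform_within_open[where s="U \<inter> ball ths \<eta>"]) (use U eta eq in auto)
  qed
  have dir: "AE x in M. \<forall>e>0. \<exists>t>0. (\<phi> x (ths + t *\<^sub>R w) - \<phi> x ths) / t \<le> g x ths \<bullet> w + e"
    if w1: "norm w = 1" for w
  proof -
    define tt where "tt j = \<eta> / real (j + 2)" for j :: nat
    have tt_pos: "tt j > 0" for j unfolding tt_def using eta by simp
    have tt_lt: "tt j < \<eta>" for j unfolding tt_def using eta by (simp add: field_simps add_pos_nonneg)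
    define C where "C j x = (\<phi> x (ths + tt j *\<^sub>R w) - \<phi> x ths) / tt j - g x ths \<bullet> w" for j x
    have C_nn: "AE x in M. \<forall>j. C j x \<ge> 0"
      using g_subgrad
    proof eventually_elim
      case (elim x)
      show ?case
      proof
        fix j
        have "\<phi> x (ths + tt j *\<^sub>R w) \<ge> \<phi> x ths + g x ths \<bullet> ((ths + tt j *\<^sub>R w) - ths)" using elim by blast
        then have "tt j * (g x ths \<bullet> w) \<le> \<phi> x (ths + tt j *\<^sub>R w) - \<phi> x ths" by simp
        then show "C j x \<ge> 0" unfolding C_def using tt_pos[of j] by (simp add: field_simps)
      qed
    qed
    have ths_ball: "ths \<in> ball ths \<eta>" using eta by simp
    have thj_ball: "ths + tt j *\<^sub>R w \<in> ball ths \<eta>" for j using tt_lt[of j] tt_pos[of j] w1 by (simp add: dist_norm)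
    have gi: "integrable M (\<lambda>x. g x ths \<bullet> w)" using g_int[OF ths_ball] by (intro integrable_inner_left)
    have C_int: "integrable M (C j)" for j
    proof -
      have "integrable M (\<lambda>x. (\<phi> x (ths + tt j *\<^sub>R w) - \<phi> x ths) / tt j)"
        using phi_int by (intro Bochner_Integration.integrable_divide Bochner_Integration.integrable_diff)
      then show ?thesis unfolding C_def[abs_def] using gi by (intro Bochner_Integration.integrable_diff)
    qed
    have C_E: "(\<integral>x. C j x \<partial>M) \<le> L * tt j" for j
    proof -
      let ?th = "ths + tt j *\<^sub>R w"
      have "(\<integral>x. C j x \<partial>M) = (\<integral>x. (\<phi> x ?th - \<phi> x ths) / tt j \<partial>M) - (\<integral>x. g x ths \<bullet> w \<partial>M)"
        unfolding C_def using phi_int gi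
        by (intro Bochner_Integration.integral_diff Bochner_Integration.integrable_divide Bochner_Integration.integrable_diff)
      also have "\<dots> = (\<Phi> ?th - \<Phi> ths) / tt j - G ths \<bullet> w"
        unfolding Phi_def G_def using phi_int g_int[OF ths_ball] by simp
      also have "\<dots> = (\<Phi> ?th - \<Phi> ths) / tt j" using G0 by simp
      also have "\<dots> \<le> L * tt j"
      proof -
        have "\<Phi> ths \<ge> \<Phi> ?th + G ?th \<bullet> (ths - ?th)" by (rule Phi_sub[OF thj_ball])
        then have "\<Phi> ?th - \<Phi> ths \<le> tt j * (G ?th \<bullet> w)" by (simp add: inner_diff_right)
        also have "\<dots> \<le> tt j * (L * tt j)"
        proof (rule mult_left_mono)
          have "G ?th \<bullet> w \<le> norm (G ?th) * norm w" by (rule norm_cauchy_schwarz)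
          also have "\<dots> \<le> L * norm (?th - ths)" using G_bound[of ?th] w1 by simp
          also have "norm (?th - ths) = tt j" using w1 tt_pos[of j] by simp
          finally show "G ?th \<bullet> w \<le> L * tt j" .
        qed (use tt_pos[of j] in simp)
        finally show ?thesis using tt_pos[of j] by (simp add: field_simps power2_eq_square)
      qed
      finally show ?thesis .
    qed
    have Cm: "C j \<in> borel_measurable M" for j using C_int[of j] by auto
    define I where "I x = (INF j. ennreal (C j x))" for x
    have I_meas: "I \<in> borel_measurable M" unfolding I_def[abs_def] using Cm by measurable
    have "(\<integral>\<^sup>+x. I x \<partial>M) \<le> 0"
    proof (rule ennreal_le_epsilon)
      fix e :: real assume e: "e > 0"
      obtain j :: nat where j: "real j > L * \<eta> / e" using reals_Archimedean2 by blast
      have Ltt: "L * tt j \<le> e"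
      proof -
        have "L * \<eta> < e * real j" using j e by (simp add: field_simps)
        also have "\<dots> \<le> e * real (j + 2)" using e by simp
        finally show ?thesis unfolding tt_def by (simp add: field_simps)
      qed
      have "(\<integral>\<^sup>+x. I x \<partial>M) \<le> (\<integral>\<^sup>+x. ennreal (C j x) \<partial>M)" unfolding I_def by (intro nn_integral_mono INF_lower) auto
      also have "\<dots> = ennreal (\<integral>x. C j x \<partial>M)"
        using C_nn by (intro nn_integral_eq_integral C_int) (auto elim: AE_mp)
      also have "\<dots> \<le> ennreal e" using C_E[of j] Ltt by (intro ennreal_leI) linarith
      finally show "(\<integral>\<^sup>+x. I x \<partial>M) \<le> 0 + ennreal e" by simp
    qed
    then have "(\<integral>\<^sup>+x. I x \<partial>M) = 0" by simp
    then have "AE x in M. I x = 0" using nn_integral_0_iff_AE[OF I_meas] by simp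
    then show ?thesis
      using C_nn
    proof eventually_elim
      case (elim x)
      show ?case
      proof (intro allI impI)
        fix e :: real assume e: "e > 0"
        have "(INF j. ennreal (C j x)) < ennreal e" using elim(1) e unfolding I_def by simp
        then obtain j where "ennreal (C j x) < ennreal e" by (auto simp: INF_less_iff)
        then have "C j x < e" using elim(2) by (simp add: ennreal_less_iff)
        then show "\<exists>t>0. (\<phi> x (ths + t *\<^sub>R w) - \<phi> x ths) / t \<le> g x ths \<bullet> w + e"
          using tt_pos[of j] unfolding C_def by (intro exI[of _ "tt j"]) auto
      qed
    qed
  qed
  have good: "AE x in M. \<forall>v. v \<longlonglongrightarrow> ths \<longrightarrow> (\<lambda>m. g x (v m)) \<longlonglongrightarrow> g x ths"
  proof -
    have "AE x in M. \<forall>i\<in>UNIV. \<forall>w\<in>{axis i 1, - axis i 1}. \<forall>e>0. \<exists>t>0. (\<phi> x (ths + t *\<^sub>R w) - \<phi> x ths) / t \<le> g x ths \<bullet> w + e"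
      by (intro AE_finite_allI dir) auto
    then show ?thesis
      using g_subgrad AE_space
    proof eventually_elim
      case (elim x)
      show ?case
      proof (intro allI impI)
        fix v :: "nat \<Rightarrow> real^'d" assume v: "v \<longlonglongrightarrow> ths"
        show "(\<lambda>m. g x (v m)) \<longlonglongrightarrow> g x ths"
        proof (rule conv_pointwise[OF phi_convex[OF elim(3)] _ _ v])
          show "\<And>\<theta> \<theta>'. \<phi> x \<theta>' \<ge> \<phi> x \<theta> + g x \<theta> \<bullet> (\<theta>' - \<theta>)" using elim(2) by blast
          show "\<And>i w e. w \<in> {axis i 1, - axis i 1} \<Longrightarrow> e > 0 \<Longrightarrow> \<exists>t>0. (\<phi> x (ths + t *\<^sub>R w) - \<phi> x ths) / t \<le> g x ths \<bullet> w + e"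
            using elim(1) by blast
        qed
      qed
    qed
  qed
  define Mf where "Mf \<theta> = (\<integral>x. outer (g x \<theta>) (g x \<theta>) \<partial>M)" for \<theta>
  have Mf_seq: "(\<lambda>m. Mf (v m)) \<longlonglongrightarrow> Mf ths" if v: "v \<longlonglongrightarrow> ths" for v
  proof -
    have "eventually (\<lambda>m. dist (v m) ths < \<eta>) sequentially" using v eta by (rule tendstoD)
    then obtain N where N: "\<And>m. m \<ge> N \<Longrightarrow> v m \<in> ball ths \<eta>" by (auto simp: eventually_sequentially dist_commute)
    have vN: "(\<lambda>m. v (m + N)) \<longlonglongrightarrow> ths" using v by (rule LIMSEQ_ignore_initial_segment)
    show ?thesis
    proof (rule LIMSEQ_offset[where k=N])
      show "(\<lambda>m. Mf (v (m + N))) \<longlonglongrightarrow> Mf ths"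
        unfolding Mf_def
      proof (rule integral_dominated_convergence[where w="\<lambda>x. 2 * s x + 2 * (L * \<eta>)\<^sup>2"])
        show "(\<lambda>x. outer (g x ths) (g x ths)) \<in> borel_measurable M" by (rule outer_meas)
        show "\<And>m. (\<lambda>x. outer (g x (v (m+N))) (g x (v (m+N)))) \<in> borel_measurable M" by (rule outer_meas)
        show "integrable M (\<lambda>x. 2 * s x + 2 * (L * \<eta>)\<^sup>2)" using s_int by simp
        show "AE x in M. (\<lambda>m. outer (g x (v (m+N))) (g x (v (m+N)))) \<longlonglongrightarrow> outer (g x ths) (g x ths)"
          using good
        proof eventually_elim
          case (elim x)
          then have "(\<lambda>m. g x (v (m+N))) \<longlonglongrightarrow> g x ths" using vN by blast
          then show ?case unfolding outer_def by (intro tendsto_intros)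
        qed
        show "AE x in M. norm (outer (g x (v (m+N))) (g x (v (m+N)))) \<le> 2 * s x + 2 * (L * \<eta>)\<^sup>2" for m
          using g_sq[OF N[of "m+N", OF le_add2]] by eventually_elim (simp add: outer_norm power2_eq_square)
      qed
    qed
  qed
  have Mf_cont: "\<exists>d>0. \<forall>\<theta>. norm (\<theta> - ths) < d \<longrightarrow> norm (Mf \<theta> - Mf ths) < e" if e: "e > 0" for e
  proof -
    have "continuous (at ths) Mf" by (rule continuous_at_sequentiallyI) (rule Mf_seq)
    then show ?thesis using e unfolding continuous_at_eps_delta by (auto simp: dist_norm)
  qed
  define A where "A = {\<epsilon>..T} \<times> ball ths R"
  have A_ne: "A \<noteq> {}" unfolding A_def using epsT Rr by auto
  define c0 where "c0 = norm ths + R"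
  have y_bound: "norm y \<le> c0" if "y \<in> ball ths R" for y
  proof -
    have "norm y \<le> norm ths + norm (y - ths)" using norm_triangle_ineq[of ths "y - ths"] by simp
    also have "norm (y - ths) < R" using that by (simp add: dist_norm norm_minus_commute)
    finally show ?thesis unfolding c0_def by simp
  qed
  have c0_nn: "c0 \<ge> 0" unfolding c0_def using Rr by simp
  \<comment> \<open>Part (i)\<close>
  define D where "D = \<bar>\<delta>\<bar> + 1"
  have Dp: "D > 0" unfolding D_def by simp
  define a where "a = (r / (4 * D))\<^sup>2"
  have ap: "a > 0" unfolding a_def using Rr Dp by simp
  define Bn where "Bn n = {x \<in> space M. a * real n \<le> s x}" for n :: nat
  have Bn_sets: "Bn n \<in> sets M" for n unfolding Bn_def using s_meas by measurable
  define \<beta> where "\<beta> n = (\<integral>x. s x * indicator (Bn n) x \<partial>M) / a" for n :: nat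
  have \<beta>_lim: "\<beta> \<longlonglongrightarrow> 0"
  proof -
    have "(\<lambda>n. \<integral>x. s x * indicator (Bn n) x \<partial>M) \<longlonglongrightarrow> (\<integral>x. 0 \<partial>M)"
    proof (rule integral_dominated_convergence[where w=s])
      show "(\<lambda>x. 0::real) \<in> borel_measurable M" by simp
      show "(\<lambda>x. s x * indicator (Bn n) x) \<in> borel_measurable M" for n using s_meas Bn_sets by measurable
      show "integrable M s" by (rule s_int)
      show "AE x in M. (\<lambda>n. s x * indicator (Bn n) x) \<longlonglongrightarrow> 0"
      proof (rule AE_I2)
        fix x assume "x \<in> space M"
        have "eventually (\<lambda>n. real n \<ge> s x / a + 1) sequentially" by (rule ev_ge)
        then have "eventually (\<lambda>n. s x * indicator (Bn n) x = 0) sequentially"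
        proof eventually_elim
          case (elim n)
          then have "a * real n > s x" using ap by (simp add: field_simps)
          then show ?case unfolding Bn_def by auto
        qed
        then show "(\<lambda>n. s x * indicator (Bn n) x) \<longlonglongrightarrow> 0" by (rule tendsto_eventually)
      qed
      show "AE x in M. norm (s x * indicator (Bn n) x) \<le> s x" for n
        using s_nn by (intro AE_I2) (auto split: split_indicator)
    qed
    then have "(\<lambda>n. (\<integral>x. s x * indicator (Bn n) x \<partial>M) / a) \<longlonglongrightarrow> 0 / a" using ap by (intro tendsto_intros) auto
    then show ?thesis unfolding \<beta>_def[abs_def] by simp
  qed
  have kern_bound: "real n * sgd_kernel M g \<delta> ths th0 n (nat \<lfloor>real n * t\<rfloor>) y (- ball y r) \<le> \<beta> n"
    if n4: "real n * \<epsilon> \<ge> 4" and tA: "t \<in> {\<epsilon>..T}" and yA: "y \<in> ball ths R"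
      and c1: "2 * c0 / (real n * \<epsilon>) < r / 2" and c2: "2 * c0 / (\<epsilon> * sqrt (real n)) < \<eta>"
      and c3: "L * (2 * c0 / (\<epsilon> * sqrt (real n))) < r / (4 * D)" and n1: "real n \<ge> 1" for n t y
  proof -
    define k where "k = nat \<lfloor>real n * t\<rfloor>"
    define kk where "kk = real (k - 1)"
    define h where "h = (sqrt (real n) / kk) *\<^sub>R y"
    define u where "u = (1 / kk) *\<^sub>R y"
    have te: "\<epsilon> \<le> t" using tA by simp
    have k2: "k \<ge> 2" using kbounds(1)[OF n4 te epsT(1)] unfolding k_def .
    have kk2: "kk \<ge> real n * \<epsilon> / 2" using kbounds(2)[OF n4 te epsT(1)] unfolding kk_def k_def .
    have ny: "norm y \<le> c0" using y_bound[OF yA] .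
    have hn: "norm h \<le> 2 * c0 / (\<epsilon> * sqrt (real n))" unfolding h_def by (rule geom(1)[OF n4 te epsT(1) ny kk2])
    have un: "norm u \<le> 2 * c0 / (real n * \<epsilon>)" unfolding u_def by (rule geom(3)[OF n4 te epsT(1) ny kk2])
    have hb: "ths + h \<in> ball ths \<eta>" using hn c2 by (simp add: dist_norm)
    have n0: "n > 0" using n1 by simp
    have sn1: "sqrt (real n) \<ge> 1" using n1 by simp
    have step: "sgd_step g \<delta> ths th0 n k y x - y = u - (\<delta> / sqrt (real n)) *\<^sub>R g x (ths + h)" for x
      unfolding u_def h_def kk_def by (rule step_formula[OF n0 k2])
    have Lh: "L * norm h < r / (4 * D)" using hn c3 L(1) by (smt (verit) mult_left_mono)
    have sub: "AE x in M. x \<in> {x \<in> space M. sgd_step g \<delta> ths th0 n k y x \<in> - ball y r} \<longrightarrow> x \<in> Bn n"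
      using s_bound
    proof eventually_elim
      case (elim x)
      show ?case
      proof (intro impI)
        assume xin: "x \<in> {x \<in> space M. sgd_step g \<delta> ths th0 n k y x \<in> - ball y r}"
        define gg where "gg = g x (ths + h)"
        define \<sigma> where "\<sigma> = sqrt (real n)"
        have sp: "\<sigma> \<ge> 1" unfolding \<sigma>_def using sn1 .
        have xs: "x \<in> space M" using xin by simp
        have "\<not> dist y (sgd_step g \<delta> ths th0 n k y x) < r" using xin by simp
        then have r_le: "r \<le> norm (u - (\<delta> / \<sigma>) *\<^sub>R gg)"
          unfolding \<sigma>_def gg_def step[symmetric] by (simp add: dist_norm norm_minus_commute)
        have sq: "(norm (gg - G (ths + h)))\<^sup>2 \<le> s x" using elim hb unfolding gg_def by blast
        have n1': "norm (gg - G (ths + h)) \<le> sqrt (s x)" using sq by (simp add: real_le_rsqrt)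
        have n2: "norm (G (ths + h)) \<le> L * norm h" using G_bound[of "ths + h"] by simp
        have ngg: "norm gg \<le> sqrt (s x) + r / (4 * D)"
        proof -
          have "norm gg \<le> norm (gg - G (ths + h)) + norm (G (ths + h))" by (metis diff_add_cancel norm_triangle_ineq)
          then show ?thesis using n1' n2 Lh by linarith
        qed
        have "r \<le> norm u + norm ((\<delta> / \<sigma>) *\<^sub>R gg)" using r_le norm_triangle_ineq4[of u "(\<delta> / \<sigma>) *\<^sub>R gg"] by linarith
        moreover have "norm u < r / 2" using un c1 by linarith
        moreover have "norm ((\<delta> / \<sigma>) *\<^sub>R gg) = \<bar>\<delta>\<bar> / \<sigma> * norm gg" using sp by simp
        ultimately have "r / 2 < \<bar>\<delta>\<bar> / \<sigma> * norm gg" by linarith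
        then have A2: "r * \<sigma> / 2 < \<bar>\<delta>\<bar> * norm gg" using sp by (simp add: field_simps)
        have A3: "\<bar>\<delta>\<bar> * norm gg \<le> D * (sqrt (s x) + r / (4 * D))"
          using ngg by (intro mult_mono) (auto simp: D_def)
        have A4: "D * (sqrt (s x) + r / (4 * D)) = D * sqrt (s x) + r / 4" using Dp by (simp add: field_simps)
        have "r * 1 \<le> r * \<sigma>" using sp Rr by (intro mult_left_mono) auto
        then have "r * \<sigma> / 4 < D * sqrt (s x)" using A2 A3 A4 by linarith
        then have A5: "r * \<sigma> / (4 * D) < sqrt (s x)" using Dp by (simp add: field_simps)
        have A6: "0 \<le> r * \<sigma> / (4 * D)" using Rr Dp sp by simp
        have "(r * \<sigma> / (4 * D))\<^sup>2 < (sqrt (s x))\<^sup>2" using A5 A6 by (intro power_strict_mono) auto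
        also have "\<dots> = s x" using s_nn[of x] by simp
        finally have "(r * \<sigma> / (4 * D))\<^sup>2 < s x" .
        moreover have "(r * \<sigma> / (4 * D))\<^sup>2 = a * real n"
          unfolding a_def \<sigma>_def using n1 by (simp add: power_divide power_mult_distrib)
        ultimately show "x \<in> Bn n" unfolding Bn_def using xs by simp
      qed
    qed
    have "sgd_kernel M g \<delta> ths th0 n k y (- ball y r) \<le> measure M (Bn n)"
      unfolding sgd_kernel_def by (rule P.finite_measure_mono_AE[OF sub Bn_sets])
    also have "measure M (Bn n) = measure M {x \<in> space M. s x * indicator (Bn n) x \<ge> a * real n}"
    proof -
      have anp: "a * real n > 0" using ap n0 by simp
      then show ?thesis by (intro arg_cong[where f="measure M"]) (auto simp: Bn_def split: split_indicator)
    qed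
    also have "\<dots> \<le> (\<integral>x. s x * indicator (Bn n) x \<partial>M) / (a * real n)"
      using ap n0 s_nn Bn_sets s_int
      by (intro integral_Markov_inequality_measure[where A="space M"] integrable_real_mult_indicator) auto
    finally have "real n * sgd_kernel M g \<delta> ths th0 n k y (- ball y r) \<le> real n * ((\<integral>x. s x * indicator (Bn n) x \<partial>M) / (a * real n))"
      using n0 by (intro mult_left_mono) auto
    also have "\<dots> = \<beta> n" unfolding \<beta>_def using n0 ap by (simp add: field_simps)
    finally show ?thesis unfolding k_def .
  qed
  have part1: "((\<lambda>n::nat. SUP p\<in>{\<epsilon>..T} \<times> ball ths R.
        ereal (real n * sgd_kernel M g \<delta> ths th0 n (nat \<lfloor>real n * fst p\<rfloor>) (snd p)
                         (- ball (snd p) r))) \<longlongrightarrow> 0) sequentially"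
  proof (rule sup_to_zero[OF A_ne[unfolded A_def]])
    show "0 \<le> real n * sgd_kernel M g \<delta> ths th0 n (nat \<lfloor>real n * fst p\<rfloor>) (snd p) (- ball (snd p) r)" for n p
      by (simp add: sgd_kernel_def)
    fix e :: real assume e: "e > 0"
    have ev1: "eventually (\<lambda>n. real n \<ge> 4 / \<epsilon>) sequentially" by (rule ev_ge)
    have ev2: "eventually (\<lambda>n. (2 * c0 / \<epsilon>) / real n < r / 2) sequentially" using Rr by (intro ev_div_n) auto
    have ev3: "eventually (\<lambda>n. (2 * c0 / \<epsilon>) / sqrt (real n) < \<eta>) sequentially" using eta by (intro ev_div_sqrt)
    have ev4: "eventually (\<lambda>n. (L * (2 * c0 / \<epsilon>)) / sqrt (real n) < r / (4 * D)) sequentially" using Rr Dp by (intro ev_div_sqrt) auto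
    have ev5: "eventually (\<lambda>n. real n \<ge> 1) sequentially" by (rule ev_ge)
    have ev6: "eventually (\<lambda>n. \<beta> n < e) sequentially" using \<beta>_lim e by (intro order_tendstoD(2)) auto
    from ev1 ev2 ev3 ev4 ev5 ev6
    show "eventually (\<lambda>n. \<forall>p\<in>{\<epsilon>..T} \<times> ball ths R. real n * sgd_kernel M g \<delta> ths th0 n (nat \<lfloor>real n * fst p\<rfloor>) (snd p) (- ball (snd p) r) \<le> e) sequentially"
    proof eventually_elim
      case (elim n)
      have n4: "real n * \<epsilon> \<ge> 4" using elim(1) epsT(1) by (simp add: field_simps)
      show ?case
      proof
        fix p assume p: "p \<in> {\<epsilon>..T} \<times> ball ths R"
        have "real n * sgd_kernel M g \<delta> ths th0 n (nat \<lfloor>real n * fst p\<rfloor>) (snd p) (- ball (snd p) r) \<le> \<beta> n"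
          using p elim by (intro kern_bound[OF n4]) (auto simp: field_simps)
        then show "real n * sgd_kernel M g \<delta> ths th0 n (nat \<lfloor>real n * fst p\<rfloor>) (snd p) (- ball (snd p) r) \<le> e"
          using elim(6) by simp
      qed
    qed
  qed
  have drift_int: "(\<integral>x. (u - c *\<^sub>R g x \<theta>) \<partial>M) = u - c *\<^sub>R G \<theta>" if th: "\<theta> \<in> ball ths \<eta>" for u c \<theta>
  proof -
    have "(\<integral>x. (u - c *\<^sub>R g x \<theta>) \<partial>M) = (\<integral>x. u \<partial>M) - (\<integral>x. c *\<^sub>R g x \<theta> \<partial>M)"
      by (rule Bochner_Integration.integral_diff) (use g_int[OF th] in auto)
    also have "\<dots> = u - c *\<^sub>R G \<theta>" unfolding G_def by (simp add: P.prob_space)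
    finally show ?thesis .
  qed
  have diff_int: "(\<integral>x. outer (u - c *\<^sub>R g x \<theta>) (u - c *\<^sub>R g x \<theta>) \<partial>M)
      = outer u u - c *\<^sub>R (outer u (G \<theta>) + outer (G \<theta>) u) + c\<^sup>2 *\<^sub>R Mf \<theta>" if th: "\<theta> \<in> ball ths \<eta>" for u c \<theta>
  proof -
    have i1: "integrable M (\<lambda>x. outer u (g x \<theta>))" by (rule integrable_bounded_linear[OF outer_bl_right g_int[OF th]])
    have i2: "integrable M (\<lambda>x. outer (g x \<theta>) u)" using integrable_bounded_linear[OF outer_bl_left g_int[OF th]] .
    have i3: "integrable M (\<lambda>x. outer (g x \<theta>) (g x \<theta>))" by (rule outer_int[OF th])
    have e1: "(\<integral>x. outer u (g x \<theta>) \<partial>M) = outer u (G \<theta>)" unfolding G_def by (rule integral_bounded_linear[OF outer_bl_right g_int[OF th]])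
    have e2: "(\<integral>x. outer (g x \<theta>) u \<partial>M) = outer (G \<theta>) u" unfolding G_def using integral_bounded_linear[OF outer_bl_left g_int[OF th]] .
    have i12: "integrable M (\<lambda>x. c *\<^sub>R (outer u (g x \<theta>) + outer (g x \<theta>) u))"
      using i1 i2 by (intro integrable_scaleR_right Bochner_Integration.integrable_add)
    have i0: "integrable M (\<lambda>x. outer u u - c *\<^sub>R (outer u (g x \<theta>) + outer (g x \<theta>) u))"
      using i12 by (intro Bochner_Integration.integrable_diff) auto
    have i3': "integrable M (\<lambda>x. c\<^sup>2 *\<^sub>R outer (g x \<theta>) (g x \<theta>))" using i3 by (intro integrable_scaleR_right)
    have "(\<integral>x. outer (u - c *\<^sub>R g x \<theta>) (u - c *\<^sub>R g x \<theta>) \<partial>M)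
        = (\<integral>x. (outer u u - c *\<^sub>R (outer u (g x \<theta>) + outer (g x \<theta>) u)) + c\<^sup>2 *\<^sub>R outer (g x \<theta>) (g x \<theta>) \<partial>M)"
      by (simp only: outer_expand)
    also have "\<dots> = (\<integral>x. outer u u - c *\<^sub>R (outer u (g x \<theta>) + outer (g x \<theta>) u) \<partial>M) + (\<integral>x. c\<^sup>2 *\<^sub>R outer (g x \<theta>) (g x \<theta>) \<partial>M)"
      by (rule Bochner_Integration.integral_add[OF i0 i3'])
    also have "(\<integral>x. outer u u - c *\<^sub>R (outer u (g x \<theta>) + outer (g x \<theta>) u) \<partial>M)
        = (\<integral>x. outer u u \<partial>M) - (\<integral>x. c *\<^sub>R (outer u (g x \<theta>) + outer (g x \<theta>) u) \<partial>M)"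
      by (rule Bochner_Integration.integral_diff[OF _ i12]) auto
    also have "(\<integral>x. c *\<^sub>R (outer u (g x \<theta>) + outer (g x \<theta>) u) \<partial>M) = c *\<^sub>R ((\<integral>x. outer u (g x \<theta>) \<partial>M) + (\<integral>x. outer (g x \<theta>) u \<partial>M))"
      using i1 i2 by (simp add: Bochner_Integration.integral_add)
    also have "(\<integral>x. c\<^sup>2 *\<^sub>R outer (g x \<theta>) (g x \<theta>) \<partial>M) = c\<^sup>2 *\<^sub>R Mf \<theta>" unfolding Mf_def by simp
    also have "(\<integral>x. outer u u \<partial>M) = outer u u" by (simp add: P.prob_space)
    finally show ?thesis unfolding e1 e2 .
  qed
  have part2: "((\<lambda>n::nat. SUP p\<in>{\<epsilon>..T} \<times> ball ths R.
        ereal (norm (sgd_drift M g \<delta> ths th0 n (fst p) (snd p)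
                     - (1 / fst p) *\<^sub>R ((mat 1 - \<delta> *\<^sub>R H) *v snd p)))) \<longlongrightarrow> 0) sequentially"
  proof (rule sup_to_zero[OF A_ne[unfolded A_def]])
    show "0 \<le> norm (sgd_drift M g \<delta> ths th0 n (fst p) (snd p) - (1 / fst p) *\<^sub>R ((mat 1 - \<delta> *\<^sub>R H) *v snd p))" for n p
      by simp
    fix e :: real assume e: "e > 0"
    obtain K where K: "\<And>v. norm (H *v v) \<le> norm v * K" "K > 0"
      using bounded_linear.pos_bounded[OF has_derivative_bounded_linear[OF G_deriv]] by blast
    define Q where "Q = 2 * c0 / \<epsilon>"
    have Qn: "Q \<ge> 0" unfolding Q_def using c0_nn epsT by simp
    define C1 where "C1 = c0 * (1 + \<bar>\<delta>\<bar> * K)"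
    define e' where "e' = e / (2 * ((\<bar>\<delta>\<bar> + 1) * (Q + 1)))"
    have den: "(\<bar>\<delta>\<bar> + 1) * (Q + 1) > 0" using Qn by (intro mult_pos_pos) auto
    have e'p: "e' > 0" unfolding e'_def using e den by simp
    have e'b: "\<bar>\<delta>\<bar> * e' * Q \<le> e / 2"
    proof -
      have "\<bar>\<delta>\<bar> * Q \<le> (\<bar>\<delta>\<bar> + 1) * (Q + 1)" using Qn by (intro mult_mono) auto
      then have "e' * (\<bar>\<delta>\<bar> * Q) \<le> e' * ((\<bar>\<delta>\<bar> + 1) * (Q + 1))" using e'p by (intro mult_left_mono) auto
      also have "\<dots> = e / 2" unfolding e'_def using den by (simp add: field_simps)
      finally show ?thesis by (simp add: mult_ac)
    qed
    from G_deriv[unfolded has_derivative_at_alt] have "\<forall>e>0. \<exists>d>0. \<forall>y. norm (y - ths) < d \<longrightarrow> norm (G y - G ths - H *v (y - ths)) \<le> e * norm (y - ths)"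
      by blast
    then obtain d where d: "d > 0" "\<And>y. norm (y - ths) < d \<Longrightarrow> norm (G y - G ths - H *v (y - ths)) \<le> e' * norm (y - ths)"
      using e'p by blast
    have ev1: "eventually (\<lambda>n. real n \<ge> 4 / \<epsilon>) sequentially" by (rule ev_ge)
    have ev2: "eventually (\<lambda>n. Q / sqrt (real n) < d) sequentially" using d by (intro ev_div_sqrt) auto
    have ev3: "eventually (\<lambda>n. Q / sqrt (real n) < \<eta>) sequentially" using eta by (intro ev_div_sqrt)
    have ev4: "eventually (\<lambda>n. (4 * C1 / \<epsilon>\<^sup>2) / real n < e / 2) sequentially" using e by (intro ev_div_n) auto
    have ev5: "eventually (\<lambda>n. real n \<ge> 1) sequentially" by (rule ev_ge)
    from ev1 ev2 ev3 ev4 ev5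
    show "eventually (\<lambda>n. \<forall>p\<in>{\<epsilon>..T} \<times> ball ths R. norm (sgd_drift M g \<delta> ths th0 n (fst p) (snd p) - (1 / fst p) *\<^sub>R ((mat 1 - \<delta> *\<^sub>R H) *v snd p)) \<le> e) sequentially"
    proof eventually_elim
      case (elim n)
      have n4: "real n * \<epsilon> \<ge> 4" using elim(1) epsT(1) by (simp add: field_simps)
      show ?case
      proof (clarsimp)
        fix t and y :: "real^'d"
        assume tA: "\<epsilon> \<le> t" "t \<le> T" and yA: "dist ths y < R"
        have yA': "y \<in> ball ths R" using yA by simp
        define k where "k = nat \<lfloor>real n * t\<rfloor>"
        define kk where "kk = real (k - 1)"
        define \<sigma> where "\<sigma> = sqrt (real n)"
        define h where "h = (\<sigma> / kk) *\<^sub>R y"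
        define u where "u = (1 / kk) *\<^sub>R y"
        have k2: "k \<ge> 2" using kbounds(1)[OF n4 tA(1) epsT(1)] unfolding k_def .
        have kk2: "kk \<ge> real n * \<epsilon> / 2" using kbounds(2)[OF n4 tA(1) epsT(1)] unfolding kk_def k_def .
        have kdiff: "\<bar>real n / kk - 1 / t\<bar> \<le> 4 / (\<epsilon>\<^sup>2 * real n)" using kbounds(4)[OF n4 tA(1) epsT(1)] unfolding kk_def k_def .
        have tp: "t > 0" using tA epsT by linarith
        have n0: "n > 0" using elim(5) by simp
        have sp: "\<sigma> > 0" unfolding \<sigma>_def using n0 by simp
        have ss: "\<sigma> * \<sigma> = real n" unfolding \<sigma>_def by simp
        have kkp: "kk > 0" using k2 unfolding kk_def by simp
        have ny: "norm y \<le> c0" using y_bound[OF yA'] .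
        have hn: "norm h \<le> Q / \<sigma>" using geom(1)[OF n4 tA(1) epsT(1) ny kk2] unfolding h_def \<sigma>_def Q_def by simp
        have sh: "\<sigma> * norm h \<le> Q" using geom(2)[OF n4 tA(1) epsT(1) ny kk2] unfolding h_def \<sigma>_def Q_def .
        have hd: "norm h < d" using hn elim(2) unfolding \<sigma>_def by linarith
        have hb: "ths + h \<in> ball ths \<eta>" using hn elim(3) unfolding \<sigma>_def by (simp add: dist_norm)
        have step: "sgd_step g \<delta> ths th0 n k y x - y = u - (\<delta> / \<sigma>) *\<^sub>R g x (ths + h)" for x
          unfolding u_def h_def kk_def \<sigma>_def by (rule step_formula[OF n0 k2])
        have dr: "sgd_drift M g \<delta> ths th0 n t y = (\<sigma> * \<sigma>) *\<^sub>R (u - (\<delta> / \<sigma>) *\<^sub>R G (ths + h))"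
          unfolding sgd_drift_def k_def[symmetric] step drift_int[OF hb] ss ..
        have "sgd_drift M g \<delta> ths th0 n t y - (1 / t) *\<^sub>R ((mat 1 - \<delta> *\<^sub>R H) *v y)
            = ((\<sigma>*\<sigma>)/kk - 1/t) *\<^sub>R (y - \<delta> *\<^sub>R (H *v y)) - (\<delta>*\<sigma>) *\<^sub>R (G (ths + h) - H *v ((\<sigma>/kk) *\<^sub>R y))"
          unfolding dr u_def by (rule drift_alg[OF sp kkp tp])
        also have "G (ths + h) - H *v ((\<sigma>/kk) *\<^sub>R y) = G (ths + h) - G ths - H *v ((ths + h) - ths)"
          unfolding h_def G0 by simp
        finally have eq: "sgd_drift M g \<delta> ths th0 n t y - (1 / t) *\<^sub>R ((mat 1 - \<delta> *\<^sub>R H) *v y)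
            = (real n/kk - 1/t) *\<^sub>R (y - \<delta> *\<^sub>R (H *v y)) - (\<delta>*\<sigma>) *\<^sub>R (G (ths + h) - G ths - H *v ((ths + h) - ths))"
          unfolding ss .
        have b1: "norm (y - \<delta> *\<^sub>R (H *v y)) \<le> C1"
        proof -
          have "norm (y - \<delta> *\<^sub>R (H *v y)) \<le> norm y + \<bar>\<delta>\<bar> * norm (H *v y)"
            using norm_triangle_ineq4[of y "\<delta> *\<^sub>R (H *v y)"] by simp
          also have "\<dots> \<le> c0 + \<bar>\<delta>\<bar> * (c0 * K)"
            using ny K(1)[of y] K(2) by (intro add_mono mult_left_mono) (auto intro: order_trans mult_right_mono)
          also have "\<dots> = C1" unfolding C1_def by (simp add: algebra_simps)
          finally show ?thesis .
        qed
        have C1n: "C1 \<ge> 0" unfolding C1_def using c0_nn K(2) by simp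
        have t1: "norm ((real n/kk - 1/t) *\<^sub>R (y - \<delta> *\<^sub>R (H *v y))) < e / 2"
        proof -
          have "norm ((real n/kk - 1/t) *\<^sub>R (y - \<delta> *\<^sub>R (H *v y))) = \<bar>real n/kk - 1/t\<bar> * norm (y - \<delta> *\<^sub>R (H *v y))" by simp
          also have "\<dots> \<le> (4 / (\<epsilon>\<^sup>2 * real n)) * C1" using kdiff b1 by (intro mult_mono) auto
          also have "\<dots> = (4 * C1 / \<epsilon>\<^sup>2) / real n" by simp
          finally show ?thesis using elim(4) by linarith
        qed
        have t2: "norm ((\<delta>*\<sigma>) *\<^sub>R (G (ths + h) - G ths - H *v ((ths + h) - ths))) \<le> e / 2"
        proof -
          have "norm (G (ths + h) - G ths - H *v ((ths + h) - ths)) \<le> e' * norm h" using d(2)[of "ths + h"] hd by simp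
          then have "norm ((\<delta>*\<sigma>) *\<^sub>R (G (ths + h) - G ths - H *v ((ths + h) - ths))) \<le> (\<bar>\<delta>\<bar> * \<sigma>) * (e' * norm h)"
            using sp by (simp add: abs_mult) (intro mult_left_mono, auto)
          also have "\<dots> = \<bar>\<delta>\<bar> * e' * (\<sigma> * norm h)" by (simp add: mult_ac)
          also have "\<dots> \<le> \<bar>\<delta>\<bar> * e' * Q" using sh e'p by (intro mult_left_mono) auto
          finally show ?thesis using e'b by linarith
        qed
        show "norm (sgd_drift M g \<delta> ths th0 n t y - (1 / t) *\<^sub>R ((mat 1 - \<delta> *\<^sub>R H) *v y)) \<le> e"
          unfolding eq using norm_triangle_ineq4[of "(real n/kk - 1/t) *\<^sub>R (y - \<delta> *\<^sub>R (H *v y))"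
              "(\<delta>*\<sigma>) *\<^sub>R (G (ths + h) - G ths - H *v ((ths + h) - ths))"] t1 t2 by linarith
      qed
    qed
  qed
  have part3: "((\<lambda>n::nat. SUP p\<in>{\<epsilon>..T} \<times> ball ths R.
        ereal (norm (sgd_diffusion M g \<delta> ths th0 n (fst p) (snd p) - \<delta>\<^sup>2 *\<^sub>R \<Gamma>))) \<longlongrightarrow> 0) sequentially"
  proof (rule sup_to_zero[OF A_ne[unfolded A_def]])
    show "0 \<le> norm (sgd_diffusion M g \<delta> ths th0 n (fst p) (snd p) - \<delta>\<^sup>2 *\<^sub>R \<Gamma>)" for n p
      by simp
    fix e :: real assume e: "e > 0"
    define Q where "Q = 2 * c0 / \<epsilon>"
    have Qn: "Q \<ge> 0" unfolding Q_def using c0_nn epsT by simp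
    define e3 where "e3 = e / (3 * (\<delta>\<^sup>2 + 1))"
    have dp3: "3 * (\<delta>\<^sup>2 + 1) > 0" by (simp add: add_nonneg_pos)
    have e3p: "e3 > 0" unfolding e3_def using e dp3 by (intro divide_pos_pos)
    have e3b: "\<delta>\<^sup>2 * e3 \<le> e / 3"
    proof -
      have "\<delta>\<^sup>2 * e3 \<le> (\<delta>\<^sup>2 + 1) * e3" using e3p by (intro mult_right_mono) auto
      also have "\<dots> = e / 3" unfolding e3_def using dp3 by (simp add: field_simps)
      finally show ?thesis .
    qed
    obtain d where d: "d > 0" "\<And>\<theta>. norm (\<theta> - ths) < d \<Longrightarrow> norm (Mf \<theta> - Mf ths) < e3"
      using Mf_cont[OF e3p] by blast
    have ev1: "eventually (\<lambda>n. real n \<ge> 4 / \<epsilon>) sequentially" by (rule ev_ge)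
    have ev2: "eventually (\<lambda>n. Q / sqrt (real n) < d) sequentially" using d by (intro ev_div_sqrt) auto
    have ev3: "eventually (\<lambda>n. Q / sqrt (real n) < \<eta>) sequentially" using eta by (intro ev_div_sqrt)
    have ev4: "eventually (\<lambda>n. (Q * Q) / real n < e / 3) sequentially" using e by (intro ev_div_n) auto
    have ev6: "eventually (\<lambda>n. (2 * \<bar>\<delta>\<bar> * L * Q * Q) / real n < e / 3) sequentially" using e by (intro ev_div_n) auto
    have ev5: "eventually (\<lambda>n. real n \<ge> 1) sequentially" by (rule ev_ge)
    from ev1 ev2 ev3 ev4 ev5 ev6
    show "eventually (\<lambda>n. \<forall>p\<in>{\<epsilon>..T} \<times> ball ths R. norm (sgd_diffusion M g \<delta> ths th0 n (fst p) (snd p) - \<delta>\<^sup>2 *\<^sub>R \<Gamma>) \<le> e) sequentially"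
    proof eventually_elim
      case (elim n)
      have n4: "real n * \<epsilon> \<ge> 4" using elim(1) epsT(1) by (simp add: field_simps)
      show ?case
      proof (clarsimp)
        fix t and y :: "real^'d"
        assume tA: "\<epsilon> \<le> t" "t \<le> T" and yA: "dist ths y < R"
        have yA': "y \<in> ball ths R" using yA by simp
        define k where "k = nat \<lfloor>real n * t\<rfloor>"
        define kk where "kk = real (k - 1)"
        define \<sigma> where "\<sigma> = sqrt (real n)"
        define h where "h = (\<sigma> / kk) *\<^sub>R y"
        define u where "u = (1 / kk) *\<^sub>R y"
        have k2: "k \<ge> 2" using kbounds(1)[OF n4 tA(1) epsT(1)] unfolding k_def .
        have kk2: "kk \<ge> real n * \<epsilon> / 2" using kbounds(2)[OF n4 tA(1) epsT(1)] unfolding kk_def k_def .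
        have n0: "n > 0" using elim(5) by simp
        have np: "real n > 0" using n0 by simp
        have sp: "\<sigma> > 0" unfolding \<sigma>_def using n0 by simp
        have ss: "\<sigma> * \<sigma> = real n" unfolding \<sigma>_def by simp
        have ny: "norm y \<le> c0" using y_bound[OF yA'] .
        have hn: "norm h \<le> Q / \<sigma>" using geom(1)[OF n4 tA(1) epsT(1) ny kk2] unfolding h_def \<sigma>_def Q_def by simp
        have sh: "\<sigma> * norm h \<le> Q" using geom(2)[OF n4 tA(1) epsT(1) ny kk2] unfolding h_def \<sigma>_def Q_def .
        have un: "norm u \<le> Q / real n" using geom(3)[OF n4 tA(1) epsT(1) ny kk2] unfolding u_def Q_def by (simp add: mult.commute)
        have nu: "real n * norm u \<le> Q" using geom(4)[OF n4 tA(1) epsT(1) ny kk2] unfolding u_def Q_def .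
        have hd: "norm h < d" using hn elim(2) unfolding \<sigma>_def by linarith
        have hb: "ths + h \<in> ball ths \<eta>" using hn elim(3) unfolding \<sigma>_def by (simp add: dist_norm)
        have step: "sgd_step g \<delta> ths th0 n k y x - y = u - (\<delta> / \<sigma>) *\<^sub>R g x (ths + h)" for x
          unfolding u_def h_def kk_def \<sigma>_def by (rule step_formula[OF n0 k2])
        define Gp where "Gp = G (ths + h)"
        have df: "sgd_diffusion M g \<delta> ths th0 n t y
            = (\<sigma> * \<sigma>) *\<^sub>R (outer u u - (\<delta> / \<sigma>) *\<^sub>R (outer u Gp + outer Gp u) + (\<delta> / \<sigma>)\<^sup>2 *\<^sub>R Mf (ths + h))"
          unfolding sgd_diffusion_def k_def[symmetric] step diff_int[OF hb] ss Gp_def ..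
        have Gam: "\<Gamma> = Mf ths" unfolding Gamma_def Mf_def ..
        have eq: "sgd_diffusion M g \<delta> ths th0 n t y - \<delta>\<^sup>2 *\<^sub>R \<Gamma>
            = (\<sigma>*\<sigma>) *\<^sub>R outer u u - (\<delta>*\<sigma>) *\<^sub>R (outer u Gp + outer Gp u) + \<delta>\<^sup>2 *\<^sub>R (Mf (ths + h) - Mf ths)"
          unfolding df Gam by (rule diff_alg[OF sp])
        have Gpn: "norm Gp \<le> L * norm h" unfolding Gp_def using G_bound[of "ths + h"] by simp
        have t1: "norm ((\<sigma>*\<sigma>) *\<^sub>R outer u u) < e / 3"
        proof -
          have "norm ((\<sigma>*\<sigma>) *\<^sub>R outer u u) = (real n * norm u) * norm u" unfolding ss using np by (simp add: outer_norm)
          also have "\<dots> \<le> Q * (Q / real n)" using nu un Qn by (intro mult_mono) auto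
          also have "\<dots> = (Q * Q) / real n" by simp
          finally show ?thesis using elim(4) by linarith
        qed
        have t2: "norm ((\<delta>*\<sigma>) *\<^sub>R (outer u Gp + outer Gp u)) < e / 3"
        proof -
          have no: "norm (outer u Gp + outer Gp u) \<le> 2 * (norm u * norm Gp)"
            using norm_triangle_ineq[of "outer u Gp" "outer Gp u"] by (simp add: outer_norm mult.commute)
          have "norm ((\<delta>*\<sigma>) *\<^sub>R (outer u Gp + outer Gp u)) = (\<bar>\<delta>\<bar> * \<sigma>) * norm (outer u Gp + outer Gp u)"
            using sp by (simp add: abs_mult)
          also have "\<dots> \<le> (\<bar>\<delta>\<bar> * \<sigma>) * (2 * (norm u * (L * norm h)))"
            using no Gpn sp L(1) by (intro mult_left_mono order_trans[OF no] mult_left_mono) auto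
          also have "\<dots> = 2 * \<bar>\<delta>\<bar> * L * (\<sigma> * norm h) * norm u" by (simp add: mult_ac)
          also have "\<dots> \<le> 2 * \<bar>\<delta>\<bar> * L * Q * (Q / real n)"
            using sh un Qn L(1) by (intro mult_mono mult_left_mono) auto
          also have "\<dots> = (2 * \<bar>\<delta>\<bar> * L * Q * Q) / real n" by simp
          finally show ?thesis using elim(6) by linarith
        qed
        have t3: "norm (\<delta>\<^sup>2 *\<^sub>R (Mf (ths + h) - Mf ths)) \<le> e / 3"
        proof -
          have "norm (Mf (ths + h) - Mf ths) < e3" using d(2)[of "ths + h"] hd by simp
          then have "norm (\<delta>\<^sup>2 *\<^sub>R (Mf (ths + h) - Mf ths)) \<le> \<delta>\<^sup>2 * e3" by (simp add: mult_left_mono)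
          then show ?thesis using e3b by linarith
        qed
        have "norm (sgd_diffusion M g \<delta> ths th0 n t y - \<delta>\<^sup>2 *\<^sub>R \<Gamma>)
            \<le> norm ((\<sigma>*\<sigma>) *\<^sub>R outer u u) + norm ((\<delta>*\<sigma>) *\<^sub>R (outer u Gp + outer Gp u)) + norm (\<delta>\<^sup>2 *\<^sub>R (Mf (ths + h) - Mf ths))"
          unfolding eq by (rule order_trans[OF norm_triangle_ineq add_right_mono[OF norm_triangle_ineq4]])
        then show "norm (sgd_diffusion M g \<delta> ths th0 n t y - \<delta>\<^sup>2 *\<^sub>R \<Gamma>) \<le> e" using t1 t2 t3 by linarith
      qed
    qed
  qed
  show ?thesis using part1 part2 part3 by blast
qed


end
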